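(* Let $H$ be a connected graph, $G_n$ a graph, $p_n\in(0,1)$ with $\mathrm{Var}[T(H,G_n)]>0$, and $M>0$. Then (a) $\mathbb P(T(H,G_n)\ne T_M^\circ(H,G_n))\le\frac{2^{|V(H)|}-1}{M(1-p_n)}$; (b) $\frac{1}{\sqrt{\mathrm{Var}[T(H,G_n)]}}\mathbb E|T(H,G_n)-T_M^\circ(H,G_n)|\le\frac{2^{|V(H)|}-1}{\sqrt M(1-p_n)}$.
   Context: $G_n$ is a simple labeled graph on $V(G_n)=\{1,\dots,|V(G_n)|\}$ with adjacency $(a_{ij})$; $H=(V(H),E(H))$ with $|Aut(H)|$ automorphisms. $V(G_n)_k$ is the set of $k$-tuples of distinct vertices, $\bar{\mathbf s}$ the set of entries. $M_H(\mathbf s)=\prod_{(i,j)\in E(H)}a_{s_is_j}$, $t_H(A)=\frac1{|Aut(H)|}\sum_{\mathbf s:\bar{\mathbf s}\supseteq A}M_H(\mathbf s)$. $\{X_v\}$ i.i.d. Bernoulli$(p_n)$, $X_{\mathbf s}=\prod_uX_{s_u}$, $T(H,G_n)=\frac1{|Aut(H)|}\sum_{\mathbf s}M_H(\mathbf s)X_{\mathbf s}$. For $M>0$, $\mathcal C_M(A)$ is the condition $t_H(A)^2>Mp_n^{2|A|-2|V(H)|}\mathrm{Var}[T(H,G_n)]$, and $\mathbf 1\{\mathcal C_M(\mathbf s)\}=1$ iff $\mathcal C_M(A)$ fails for all nonempty $A\subseteq\bar{\mathbf s}$. $T_M^\circ(H,G_n)=\frac1{|Aut(H)|}\sum_{\mathbf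 s\in V(G_n)_{|V(H)|}}M_H(\mathbf s)X_{\mathbf s}\mathbf 1\{\mathcal C_M(\mathbf s)\}$. *)

theory Defs
  imports "HOL-Probability.Probability" "HOL-Library.FuncSet"
begin

definition simple_graph :: "'a set \<Rightarrow> ('a \<Rightarrow> 'a \<Rightarrow> bool) \<Rightarrow> bool" where
  "simple_graph V adj \<longleftrightarrow> (\<forall>x y. adj x y \<longrightarrow> x \<in> V \<and> y \<in> V \<and> x \<noteq> y \<and> adj y x)"

definition connected_graph :: "'a set \<Rightarrow> ('a \<Rightarrow> 'a \<Rightarrow> bool) \<Rightarrow> bool" where
  "connected_graph V adj \<longleftrightarrow> V \<noteq> {} \<and> (\<forall>x\<in>V. \<forall>y\<in>V. adj\<^sup>*\<^sup>* x y)"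

(* H has vertex set {0..<k}, adjacency adjH; G_n has vertex set {1..N}, adjacency adjG. *)

(* V(G_n)_k : k-tuples of distinct vertices, as injective maps {0..<k} -> {1..N} *)
definition vtuples :: "nat \<Rightarrow> nat \<Rightarrow> (nat \<Rightarrow> nat) set" where
  "vtuples N k = {s \<in> {0..<k} \<rightarrow>\<^sub>E {1..N}. inj_on s {0..<k}}"

definition edgesH :: "nat \<Rightarrow> (nat \<Rightarrow> nat \<Rightarrow> bool) \<Rightarrow> (nat \<times> nat) set" where
  "edgesH k adjH = {(i,j). i < j \<and> j < k \<and> adjH i j}"

definition adjmat :: "(nat \<Rightarrow> nat \<Rightarrow> bool) \<Rightarrow> nat \<Rightarrow> nat \<Rightarrow> real" where
  "adjmat adjG i j = (if adjG i j then 1 else 0)"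

definition MH :: "nat \<Rightarrow> (nat \<Rightarrow> nat \<Rightarrow> bool) \<Rightarrow> (nat \<Rightarrow> nat \<Rightarrow> bool) \<Rightarrow> (nat \<Rightarrow> nat) \<Rightarrow> real" where
  "MH k adjH adjG s = (\<Prod>(i,j)\<in>edgesH k adjH. adjmat adjG (s i) (s j))"

definition autH :: "nat \<Rightarrow> (nat \<Rightarrow> nat \<Rightarrow> bool) \<Rightarrow> (nat \<Rightarrow> nat) set" where
  "autH k adjH = {\<sigma> \<in> {0..<k} \<rightarrow>\<^sub>E {0..<k}. bij_betw \<sigma> {0..<k} {0..<k} \<and>
      (\<forall>i<k. \<forall>j<k. adjH i j \<longleftrightarrow> adjH (\<sigma> i) (\<sigma> j))}"

definition nAut :: "nat \<Rightarrow> (nat \<Rightarrow> nat \<Rightarrow> bool) \<Rightarrow> real" where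
  "nAut k adjH = real (card (autH k adjH))"

definition tH :: "nat \<Rightarrow> nat \<Rightarrow> (nat \<Rightarrow> nat \<Rightarrow> bool) \<Rightarrow> (nat \<Rightarrow> nat \<Rightarrow> bool) \<Rightarrow> nat set \<Rightarrow> real" where
  "tH N k adjH adjG A = (1 / nAut k adjH) *
     (\<Sum>s\<in>{s \<in> vtuples N k. A \<subseteq> s ` {0..<k}}. MH k adjH adjG s)"

(* X_s = prod_u X_{s_u}, with omega v the value of X_v *)
definition Xs :: "nat \<Rightarrow> (nat \<Rightarrow> bool) \<Rightarrow> (nat \<Rightarrow> nat) \<Rightarrow> real" where
  "Xs k \<omega> s = (\<Prod>u<k. if \<omega> (s u) then 1 else 0)"

definition TH :: "nat \<Rightarrow> nat \<Rightarrow> (nat \<Rightarrow> nat \<Rightarrow> bool) \<Rightarrow> (nat \<Rightarrow> nat \<Rightarrow> bool) \<Rightarrow> (nat \<Rightarrow> bool) \<Rightarrow> real" where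
  "TH N k adjH adjG \<omega> = (1 / nAut k adjH) *
     (\<Sum>s\<in>vtuples N k. MH k adjH adjG s * Xs k \<omega> s)"

definition Xpmf :: "nat \<Rightarrow> real \<Rightarrow> (nat \<Rightarrow> bool) pmf" where
  "Xpmf N p = Pi_pmf {1..N} False (\<lambda>_. bernoulli_pmf p)"

definition VarT :: "nat \<Rightarrow> nat \<Rightarrow> (nat \<Rightarrow> nat \<Rightarrow> bool) \<Rightarrow> (nat \<Rightarrow> nat \<Rightarrow> bool) \<Rightarrow> real \<Rightarrow> real" where
  "VarT N k adjH adjG p = measure_pmf.variance (Xpmf N p) (TH N k adjH adjG)"

definition CM :: "nat \<Rightarrow> nat \<Rightarrow> (nat \<Rightarrow> nat \<Rightarrow> bool) \<Rightarrow> (nat \<Rightarrow> nat \<Rightarrow> bool) \<Rightarrow> real \<Rightarrow> real \<Rightarrow> nat set \<Rightarrow> bool" where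
  "CM N k adjH adjG p M A \<longleftrightarrow>
     (tH N k adjH adjG A)\<^sup>2 > M * p powi (2 * int (card A) - 2 * int k) * VarT N k adjH adjG p"

definition goodM :: "nat \<Rightarrow> nat \<Rightarrow> (nat \<Rightarrow> nat \<Rightarrow> bool) \<Rightarrow> (nat \<Rightarrow> nat \<Rightarrow> bool) \<Rightarrow> real \<Rightarrow> real \<Rightarrow> (nat \<Rightarrow> nat) \<Rightarrow> bool" where
  "goodM N k adjH adjG p M s \<longleftrightarrow>
     (\<forall>A. A \<noteq> {} \<and> A \<subseteq> s ` {0..<k} \<longrightarrow> \<not> CM N k adjH adjG p M A)"

definition TMo :: "nat \<Rightarrow> nat \<Rightarrow> (nat \<Rightarrow> nat \<Rightarrow> bool) \<Rightarrow> (nat \<Rightarrow> nat \<Rightarrow> bool) \<Rightarrow> real \<Rightarrow> real \<Rightarrow> (nat \<Rightarrow> bool) \<Rightarrow> real" where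
  "TMo N k adjH adjG p M \<omega> = (1 / nAut k adjH) *
     (\<Sum>s\<in>vtuples N k. MH k adjH adjG s * Xs k \<omega> s * (if goodM N k adjH adjG p M s then 1 else 0))"

end

theory Submission imports Defs begin

lemma Xs_eq: "Xs k \<omega> s = (if (\<forall>v\<in>s ` {0..<k}. \<omega> v) then 1 else 0)"
proof (cases "\<forall>v\<in>s ` {0..<k}. \<omega> v")
  case True
  then have "\<forall>u\<in>{..<k}. (if \<omega> (s u) then 1 else (0::real)) = 1" by auto
  then show ?thesis using True unfolding Xs_def by simp
next
  case False
  then obtain u where "u < k" "\<not> \<omega> (s u)" by auto
  then show ?thesis using False unfolding Xs_def by (auto simp: prod_zero_iff)
qed

lemma fin_supp: "finite (set_pmf (Xpmf N p))"
proof -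
  have "set_pmf (Xpmf N p) \<subseteq> PiE_dflt {1..N} False (\<lambda>_. UNIV)"
    unfolding Xpmf_def using set_Pi_pmf_subset[of "{1..N}" False] by (auto simp: PiE_dflt_def)
  moreover have "finite (PiE_dflt {1..N} False (\<lambda>_. UNIV :: bool set))"
    by (rule finite_PiE_dflt) auto
  ultimately show ?thesis by (rule finite_subset)
qed

lemma prob_all:
  assumes "J \<subseteq> {1..N}" "0 \<le> p" "p \<le> 1"
  shows "measure_pmf.prob (Xpmf N p) {\<omega>. \<forall>v\<in>J. \<omega> v} = p ^ card J"
proof -
  have eq: "{\<omega>. \<forall>v\<in>J. \<omega> v} = Pi {1..N} (\<lambda>x. if x \<in> J then {True} else UNIV)"
    using assms(1) by (auto simp: Pi_def)
  have "measure_pmf.prob (Xpmf N p) {\<omega>. \<forall>v\<in>J. \<omega> v} = (\<Prod>x\<in>{1..N}. measure_pmf.prob (bernoulli_pmf p) (if x \<in> J then {True} else UNIV))"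
    unfolding eq Xpmf_def by (rule measure_Pi_pmf_Pi) simp
  also have "\<dots> = (\<Prod>x\<in>{1..N}. if x \<in> J then p else 1)"
    by (intro prod.cong) (auto simp: measure_pmf_single assms measure_pmf.prob_space[simplified])
  also have "\<dots> = (\<Prod>x\<in>J. p)"
  proof -
    have "{1..N} \<inter> {x. x \<in> J} = J" using assms(1) by auto
    then show ?thesis by (subst prod.If_cases) auto
  qed
  finally show ?thesis by simp
qed

lemma exp_ind:
  assumes "J \<subseteq> {1..N}" "0 \<le> p" "p \<le> 1"
  shows "measure_pmf.expectation (Xpmf N p) (\<lambda>\<omega>. if \<forall>v\<in>J. \<omega> v then 1 else 0) = p ^ card J"
proof -
  have "(\<lambda>\<omega>. if \<forall>v\<in>J. \<omega> v then 1 else 0::real) = indicator {\<omega>. \<forall>v\<in>J. \<omega> v}"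
    by (auto simp: indicator_def fun_eq_iff)
  then show ?thesis using prob_all[OF assms] by simp
qed

lemma term_bound:
  fixes p :: real
  assumes "finite I" "card I \<le> k" "0 \<le> p" "p \<le> 1"
  shows "(1-p) * (\<Sum>A\<in>Pow I - {{}}. p^(2*k - card A)) \<le> (2^k - 1) * (p^(2*k - card I) - p^k*p^k)"
proof -
  let ?m = "card I"
  let ?D = "p^(2*k - ?m) - p^k*p^k"
  have D: "p^(2*k - ?m) * (1 - p^?m) = ?D"
  proof -
    have "p^(2*k - ?m) * p^?m = p^k*p^k" using assms(2)
      by (simp flip: power_add) (simp add: mult_2)
    then show ?thesis by (simp add: algebra_simps)
  qed
  have "(1-p) * (\<Sum>A\<in>Pow I - {{}}. p^(2*k - card A)) = (\<Sum>A\<in>Pow I - {{}}. (1-p) * p^(2*k - card A))"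
    by (simp add: sum_distrib_left)
  also have "\<dots> \<le> (\<Sum>A\<in>Pow I - {{}}. ?D)"
  proof (rule sum_mono)
    fix A assume A: "A \<in> Pow I - {{}}"
    then have fA: "finite A" using assms(1) finite_subset by auto
    have cA: "card A \<le> ?m" using A assms(1) by (auto intro: card_mono)
    have c1: "1 \<le> card A" using A fA by (auto simp: Suc_le_eq card_gt_0_iff)
    have "p ^ ?m \<le> p ^ 1" using c1 cA assms by (intro power_decreasing) auto
    then have h1: "1 - p \<le> 1 - p^?m" by simp
    have h2: "p^(2*k - card A) \<le> p^(2*k - ?m)" using cA assms by (intro power_decreasing) auto
    have "(1-p) * p^(2*k - card A) \<le> (1 - p^?m) * p^(2*k - ?m)"
      using h1 h2 assms by (intro mult_mono) auto
    then show "(1-p) * p^(2*k - card A) \<le> ?D" using D by (simp add: mult.commute)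
  qed
  also have "\<dots> = real (card (Pow I - {{}})) * ?D" by simp
  also have "real (card (Pow I - {{}})) = 2^?m - 1"
    using assms(1) by (simp add: card_Diff_singleton card_Pow of_nat_diff)
  also have "(2^?m - 1) * ?D \<le> (2^k - 1) * ?D"
  proof (rule mult_right_mono)
    show "(2::real)^?m - 1 \<le> 2^k - 1" using assms(2) by (simp add: power_increasing)
    have "p^?m \<le> 1" using assms by (simp add: power_le_one)
    then have "0 \<le> p^(2*k - ?m) * (1 - p^?m)" using assms by simp
    then show "0 \<le> ?D" using D by simp
  qed
  finally show ?thesis .
qed

lemma triple_swap: "(\<Sum>a\<in>X. (c::real) * (\<Sum>s\<in>Y. \<Sum>s'\<in>Z. h a s s')) = c * (\<Sum>s\<in>Y. \<Sum>s'\<in>Z. \<Sum>a\<in>X. h a s s')"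
  by (simp add: sum_distrib_left sum.swap[of _ X])

theorem lemma5p2:
  fixes k N :: nat and adjH adjG :: "nat \<Rightarrow> nat \<Rightarrow> bool" and p M :: real
  assumes H: "simple_graph {0..<k} adjH" "connected_graph {0..<k} adjH"
    and G: "simple_graph {1..N} adjG"
    and p: "0 < p" "p < 1"
    and var: "VarT N k adjH adjG p > 0"
    and M: "M > 0"
  shows "measure_pmf.prob (Xpmf N p) {\<omega>. TH N k adjH adjG \<omega> \<noteq> TMo N k adjH adjG p M \<omega>}
           \<le> (2 ^ k - 1) / (M * (1 - p)) \<and>
         (1 / sqrt (VarT N k adjH adjG p)) *
           measure_pmf.expectation (Xpmf N p) (\<lambda>\<omega>. \<bar>TH N k adjH adjG \<omega> - TMo N k adjH adjG p M \<omega>\<bar>)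
           \<le> (2 ^ k - 1) / (sqrt M * (1 - p))"
proof -
  define c where "c = 1 / nAut k adjH"
  define VT where "VT = vtuples N k"
  define MM where "MM = MH k adjH adjG"
  define V where "V = VarT N k adjH adjG p"
  define P where "P = Xpmf N p"
  define t where "t = tH N k adjH adjG"
  define ind where "ind = (\<lambda>J (\<omega>::nat\<Rightarrow>bool). if \<forall>v\<in>J. \<omega> v then 1 else (0::real))"
  define img where "img = (\<lambda>s::nat\<Rightarrow>nat. s ` {0..<k})"
  define Bad where "Bad = {A \<in> Pow {1..N}. A \<noteq> {} \<and> CM N k adjH adjG p M A}"
  define Q where "Q = (\<Sum>A\<in>Pow {1..N} - {{}}. (t A)^2 * p^(2*k - card A))"
  have p01: "0 \<le> p" "p \<le> 1" using p by auto
  have finVT: "finite VT"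
  proof -
    have "VT \<subseteq> {0..<k} \<rightarrow>\<^sub>E {1..N}" unfolding VT_def vtuples_def by auto
    then show ?thesis by (rule finite_subset) (simp add: finite_PiE)
  qed
  have imgsub: "img s \<subseteq> {1..N}" if "s \<in> VT" for s
    using that unfolding VT_def vtuples_def img_def by (auto simp: PiE_def Pi_def)
  have cardimg: "card (img s) = k" if "s \<in> VT" for s
    using that unfolding VT_def vtuples_def img_def by (simp add: card_image)
  have finimg: "finite (img s)" for s unfolding img_def by simp
  have MMnn: "0 \<le> MM s" for s
    unfolding MM_def MH_def by (auto intro!: prod_nonneg simp: adjmat_def split: prod.splits)
  have cnn: "0 \<le> c" unfolding c_def nAut_def by simp
  have integ: "integrable (measure_pmf P) f" for f :: "_ \<Rightarrow> real"
    unfolding P_def by (rule integrable_measure_pmf_finite[OF fin_supp])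
  have Eind: "measure_pmf.expectation P (ind J) = p ^ card J" if "J \<subseteq> {1..N}" for J
    unfolding P_def ind_def using exp_ind[OF that p01] by simp
  have indmult: "ind J \<omega> * ind J' \<omega> = ind (J \<union> J') \<omega>" for J J' \<omega>
    unfolding ind_def by auto
  have Xs_ind: "Xs k \<omega> s = ind (img s) \<omega>" for \<omega> s
    unfolding ind_def img_def by (rule Xs_eq)
  have T_eq: "TH N k adjH adjG \<omega> = c * (\<Sum>s\<in>VT. MM s * ind (img s) \<omega>)" for \<omega>
    by (simp add: TH_def c_def VT_def MM_def Xs_ind)
  have ET: "measure_pmf.expectation P (TH N k adjH adjG) = c * (\<Sum>s\<in>VT. MM s * p^k)"
  proof -
    have "measure_pmf.expectation P (TH N k adjH adjG) = measure_pmf.expectation P (\<lambda>\<omega>. c * (\<Sum>s\<in>VT. MM s * ind (img s) \<omega>))"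
      by (subst T_eq[abs_def]) (rule refl)
    also have "\<dots> = c * (\<Sum>s\<in>VT. MM s * measure_pmf.expectation P (ind (img s)))"
      by (simp add: integ integral_sum)
    also have "\<dots> = c * (\<Sum>s\<in>VT. MM s * p^k)"
      by (intro arg_cong[where f="\<lambda>x. c*x"] sum.cong) (auto simp: Eind[OF imgsub] cardimg)
    finally show ?thesis .
  qed
  have ET2: "measure_pmf.expectation P (\<lambda>\<omega>. (TH N k adjH adjG \<omega>)^2) = c^2 * (\<Sum>s\<in>VT. \<Sum>s'\<in>VT. MM s * MM s' * p^card (img s \<union> img s'))"
  proof -
    have sq: "(TH N k adjH adjG \<omega>)^2 = c^2 * (\<Sum>s\<in>VT. \<Sum>s'\<in>VT. MM s * MM s' * ind (img s \<union> img s') \<omega>)" for \<omega>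
    proof -
      have "(TH N k adjH adjG \<omega>)^2 = c^2 * ((\<Sum>s\<in>VT. MM s * ind (img s) \<omega>) * (\<Sum>s'\<in>VT. MM s' * ind (img s') \<omega>))"
        by (simp add: T_eq power2_eq_square)
      also have "\<dots> = c^2 * (\<Sum>s\<in>VT. \<Sum>s'\<in>VT. MM s * MM s' * ind (img s \<union> img s') \<omega>)"
        by (simp add: sum_product indmult[symmetric] mult_ac)
      finally show ?thesis .
    qed
    have "measure_pmf.expectation P (\<lambda>\<omega>. (TH N k adjH adjG \<omega>)^2) = c^2 * (\<Sum>s\<in>VT. \<Sum>s'\<in>VT. MM s * MM s' * measure_pmf.expectation P (ind (img s \<union> img s')))"
      by (simp add: sq integ integral_sum)
    also have "\<dots> = c^2 * (\<Sum>s\<in>VT. \<Sum>s'\<in>VT. MM s * MM s' * p^card (img s \<union> img s'))"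
      by (intro arg_cong[where f="\<lambda>x. c^2*x"] sum.cong refl) (metis Eind imgsub Un_subset_iff)
    finally show ?thesis .
  qed
  have Vexp: "V = c^2 * (\<Sum>s\<in>VT. \<Sum>s'\<in>VT. MM s * MM s' * (p^card (img s \<union> img s') - p^k * p^k))"
  proof -
    have "V = measure_pmf.expectation P (\<lambda>\<omega>. (TH N k adjH adjG \<omega>)^2) - (measure_pmf.expectation P (TH N k adjH adjG))^2"
      unfolding V_def VarT_def P_def by (rule measure_pmf.variance_eq) (auto simp: integ[unfolded P_def])
    also have "(measure_pmf.expectation P (TH N k adjH adjG))^2 = c^2 * (\<Sum>s\<in>VT. \<Sum>s'\<in>VT. MM s * MM s' * (p^k*p^k))"
      by (simp add: ET power2_eq_square sum_product mult_ac)
    finally show ?thesis by (simp add: ET2 right_diff_distrib sum_subtractf)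
  qed
  have t_eq: "t A = c * (\<Sum>s\<in>VT. if A \<subseteq> img s then MM s else 0)" for A
    unfolding t_def tH_def c_def VT_def MM_def img_def
    using finVT[unfolded VT_def] by (simp add: sum.inter_filter)
  have tnn: "0 \<le> t A" for A
    unfolding t_eq using cnn MMnn by (auto intro!: sum_nonneg mult_nonneg_nonneg)
  have Vpos: "0 < V" using var V_def by simp
  have Q_eq: "Q = c^2 * (\<Sum>s\<in>VT. \<Sum>s'\<in>VT. MM s * MM s' * (\<Sum>A\<in>Pow (img s \<inter> img s') - {{}}. p^(2*k - card A)))"
  proof -
    have "(t A)^2 * p^(2*k - card A) = c^2 * (\<Sum>s\<in>VT. \<Sum>s'\<in>VT. MM s * MM s' * (if A \<subseteq> img s \<inter> img s' then p^(2*k - card A) else 0))" for A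
    proof -
      have "(t A)^2 * p^(2*k - card A) = c^2 * (\<Sum>s\<in>VT. \<Sum>s'\<in>VT. (if A \<subseteq> img s then MM s else 0) * (if A \<subseteq> img s' then MM s' else 0) * p^(2*k - card A))"
      proof -
        have "(t A)^2 * p^(2*k - card A) = c^2 * (((\<Sum>s\<in>VT. if A \<subseteq> img s then MM s else 0) * (\<Sum>s'\<in>VT. if A \<subseteq> img s' then MM s' else 0)) * p^(2*k - card A))"
          by (simp add: t_eq power2_eq_square mult_ac)
        also have "\<dots> = c^2 * (\<Sum>s\<in>VT. \<Sum>s'\<in>VT. (if A \<subseteq> img s then MM s else 0) * (if A \<subseteq> img s' then MM s' else 0) * p^(2*k - card A))"
          unfolding sum_product by (simp only: sum_distrib_right)
        finally show ?thesis .
      qed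
      also have "\<dots> = c^2 * (\<Sum>s\<in>VT. \<Sum>s'\<in>VT. MM s * MM s' * (if A \<subseteq> img s \<inter> img s' then p^(2*k - card A) else 0))"
        by (intro arg_cong[where f="\<lambda>x. c^2*x"] sum.cong refl) auto
      finally show ?thesis .
    qed
    then have "Q = (\<Sum>A\<in>Pow {1..N} - {{}}. c^2 * (\<Sum>s\<in>VT. \<Sum>s'\<in>VT. MM s * MM s' * (if A \<subseteq> img s \<inter> img s' then p^(2*k - card A) else 0)))"
      unfolding Q_def by simp
    also have "\<dots> = c^2 * (\<Sum>s\<in>VT. \<Sum>s'\<in>VT. \<Sum>A\<in>Pow {1..N} - {{}}. MM s * MM s' * (if A \<subseteq> img s \<inter> img s' then p^(2*k - card A) else 0))"
      by (rule triple_swap)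
    also have "\<dots> = c^2 * (\<Sum>s\<in>VT. \<Sum>s'\<in>VT. MM s * MM s' * (\<Sum>A\<in>Pow (img s \<inter> img s') - {{}}. p^(2*k - card A)))"
    proof (intro arg_cong[where f="\<lambda>x. c^2*x"] sum.cong refl)
      fix s s' assume s: "s \<in> VT" "s' \<in> VT"
      have "(\<Sum>A\<in>Pow {1..N} - {{}}. if A \<subseteq> img s \<inter> img s' then p^(2*k - card A) else 0) = (\<Sum>A\<in>{A \<in> Pow {1..N} - {{}}. A \<subseteq> img s \<inter> img s'}. p^(2*k - card A))"
        by (subst sum.inter_filter) auto
      also have "{A \<in> Pow {1..N} - {{}}. A \<subseteq> img s \<inter> img s'} = Pow (img s \<inter> img s') - {{}}"
        using imgsub[OF s(1)] by auto
      finally show "(\<Sum>A\<in>Pow {1..N} - {{}}. MM s * MM s' * (if A \<subseteq> img s \<inter> img s' then p^(2*k - card A) else 0)) = MM s * MM s' * (\<Sum>A\<in>Pow (img s \<inter> img s') - {{}}. p^(2*k - card A))"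
        by (simp add: sum_distrib_left[symmetric])
    qed
    finally show ?thesis .
  qed
  have key: "(1-p) * Q \<le> (2^k-1) * V"
  proof -
    have "(1-p) * Q = c^2 * (\<Sum>s\<in>VT. \<Sum>s'\<in>VT. MM s * MM s' * ((1-p) * (\<Sum>A\<in>Pow (img s \<inter> img s') - {{}}. p^(2*k - card A))))"
      by (simp add: Q_eq sum_distrib_left mult_ac)
    also have "\<dots> \<le> c^2 * (\<Sum>s\<in>VT. \<Sum>s'\<in>VT. MM s * MM s' * ((2^k-1) * (p^card (img s \<union> img s') - p^k * p^k)))"
    proof (rule mult_left_mono[OF sum_mono[OF sum_mono]])
      fix s s' assume s: "s \<in> VT" "s' \<in> VT"
      have fin: "finite (img s \<inter> img s')" using finimg by simp
      have ci: "card (img s \<inter> img s') \<le> k" using cardimg[OF s(1)] card_mono[OF finimg[of s]] by fastforce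
      have "card (img s \<union> img s') + card (img s \<inter> img s') = k + k"
        using card_Un_Int[OF finimg[of s] finimg[of s']] cardimg s by simp
      then have cu: "card (img s \<union> img s') = 2*k - card (img s \<inter> img s')" by simp
      show "MM s * MM s' * ((1-p) * (\<Sum>A\<in>Pow (img s \<inter> img s') - {{}}. p^(2*k - card A))) \<le> MM s * MM s' * ((2^k-1) * (p^card (img s \<union> img s') - p^k * p^k))"
        using term_bound[OF fin ci p01] cu MMnn by (intro mult_left_mono) auto
    qed simp
    also have "\<dots> = (2^k-1) * V" by (simp add: Vexp sum_distrib_left mult_ac)
    finally show ?thesis .
  qed
  have finBad: "finite Bad" unfolding Bad_def by simp
  have Bad_sub: "Bad \<subseteq> Pow {1..N} - {{}}" unfolding Bad_def by auto
  have bad: "card A \<le> k \<and> M * V * p^card A < (t A)^2 * p^(2*k - card A)" if "A \<in> Bad" for A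
  proof -
    have cm: "(t A)^2 > M * p powi (2 * int (card A) - 2 * int k) * V"
      using that unfolding Bad_def CM_def t_def V_def by auto
    have "t A \<noteq> 0"
    proof
      assume "t A = 0"
      moreover have "0 < M * p powi (2 * int (card A) - 2 * int k) * V" using M p Vpos by simp
      ultimately show False using cm by simp
    qed
    then have "(\<Sum>s\<in>VT. if A \<subseteq> img s then MM s else 0) \<noteq> 0" using t_eq by auto
    then obtain s where s: "s \<in> VT" "(if A \<subseteq> img s then MM s else 0) \<noteq> 0"
      by (rule sum.not_neutral_contains_not_neutral)
    then have "A \<subseteq> img s" by (auto split: if_splits)
    then have ck: "card A \<le> k" using card_mono[OF finimg[of s]] cardimg[OF s(1)] by auto
    have e: "2 * int (card A) - 2 * int k = int (card A) - int (2*k - card A)" using ck by simp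
    have pw: "p powi (2 * int (card A) - 2 * int k) = p^card A / p^(2*k - card A)"
      unfolding e using p by (subst power_int_diff) (auto simp: power_int_of_nat)
    have pp: "0 < p^(2*k - card A)" using p by simp
    from cm have "M * V * p^card A / p^(2*k - card A) < (t A)^2" unfolding pw by (simp add: mult_ac)
    then have "M * V * p^card A < (t A)^2 * p^(2*k - card A)" using pp by (simp add: pos_divide_less_eq)
    then show ?thesis using ck by simp
  qed
  have Qb: "Q \<le> (2^k-1) * V / (1-p)" using key p by (simp add: field_simps)
  have partA: "measure_pmf.prob P {\<omega>. TH N k adjH adjG \<omega> \<noteq> TMo N k adjH adjG p M \<omega>} \<le> (2^k-1)/(M*(1-p))"
  proof -
    have sub: "{\<omega>. TH N k adjH adjG \<omega> \<noteq> TMo N k adjH adjG p M \<omega>} \<subseteq> (\<Union>A\<in>Bad. {\<omega>. \<forall>v\<in>A. \<omega> v})"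
    proof
      fix \<omega> assume "\<omega> \<in> {\<omega>. TH N k adjH adjG \<omega> \<noteq> TMo N k adjH adjG p M \<omega>}"
      then have ne: "(\<Sum>s\<in>VT. MM s * ind (img s) \<omega>) \<noteq> (\<Sum>s\<in>VT. MM s * ind (img s) \<omega> * (if goodM N k adjH adjG p M s then 1 else 0))"
        by (auto simp: TH_def TMo_def VT_def MM_def Xs_ind)
      then obtain s where s: "s \<in> VT" "MM s * ind (img s) \<omega> \<noteq> MM s * ind (img s) \<omega> * (if goodM N k adjH adjG p M s then 1 else 0)"
        by (meson sum.cong)
      then have ng: "\<not> goodM N k adjH adjG p M s" and om: "\<forall>v\<in>img s. \<omega> v"
        by (auto simp: ind_def split: if_splits)
      from ng obtain A where A: "A \<noteq> {}" "A \<subseteq> img s" "CM N k adjH adjG p M A"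
        unfolding goodM_def img_def by auto
      have "A \<in> Bad" using A imgsub[OF s(1)] unfolding Bad_def by auto
      then show "\<omega> \<in> (\<Union>A\<in>Bad. {\<omega>. \<forall>v\<in>A. \<omega> v})" using A om by blast
    qed
    have "measure_pmf.prob P {\<omega>. TH N k adjH adjG \<omega> \<noteq> TMo N k adjH adjG p M \<omega>} \<le> measure_pmf.prob P (\<Union>A\<in>Bad. {\<omega>. \<forall>v\<in>A. \<omega> v})"
      using sub by (intro measure_pmf.finite_measure_mono) auto
    also have "\<dots> \<le> (\<Sum>A\<in>Bad. measure_pmf.prob P {\<omega>. \<forall>v\<in>A. \<omega> v})"
      using finBad by (intro measure_pmf.finite_measure_subadditive_finite) auto
    also have "\<dots> = (\<Sum>A\<in>Bad. p ^ card A)"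
      using Bad_sub by (intro sum.cong refl) (auto simp: P_def prob_all[OF _ p01])
    also have "\<dots> \<le> (\<Sum>A\<in>Bad. (t A)^2 * p^(2*k - card A) / (M * V))"
    proof (rule sum_mono)
      fix A assume "A \<in> Bad"
      from bad[OF this] show "p ^ card A \<le> (t A)^2 * p^(2*k - card A) / (M * V)"
        using M Vpos by (simp add: field_simps)
    qed
    also have "\<dots> \<le> (\<Sum>A\<in>Pow {1..N} - {{}}. (t A)^2 * p^(2*k - card A) / (M * V))"
      using Bad_sub M Vpos p01 by (intro sum_mono2) auto
    also have "\<dots> = Q / (M * V)" unfolding Q_def by (simp add: sum_divide_distrib)
    also have "\<dots> \<le> (2^k-1) * V / (1-p) / (M * V)"
      using Qb M Vpos by (intro divide_right_mono) auto
    also have "\<dots> = (2^k-1)/(M*(1-p))" using Vpos by simp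
    finally show ?thesis .
  qed
  define g where "g = (\<lambda>s. if goodM N k adjH adjG p M s then 0 else (1::real))"
  have Dform: "\<bar>TH N k adjH adjG \<omega> - TMo N k adjH adjG p M \<omega>\<bar> = c * (\<Sum>s\<in>VT. MM s * g s * ind (img s) \<omega>)" for \<omega>
  proof -
    have "TH N k adjH adjG \<omega> - TMo N k adjH adjG p M \<omega> = c * (\<Sum>s\<in>VT. MM s * ind (img s) \<omega> - MM s * ind (img s) \<omega> * (if goodM N k adjH adjG p M s then 1 else 0))"
      by (simp add: TH_def TMo_def VT_def MM_def Xs_ind c_def sum_subtractf right_diff_distrib)
    also have "\<dots> = c * (\<Sum>s\<in>VT. MM s * g s * ind (img s) \<omega>)"
      by (intro arg_cong[where f="\<lambda>x. c*x"] sum.cong refl) (auto simp: g_def)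
    finally have eq: "TH N k adjH adjG \<omega> - TMo N k adjH adjG p M \<omega> = c * (\<Sum>s\<in>VT. MM s * g s * ind (img s) \<omega>)" .
    have "0 \<le> c * (\<Sum>s\<in>VT. MM s * g s * ind (img s) \<omega>)"
      using cnn MMnn by (auto intro!: mult_nonneg_nonneg sum_nonneg simp: g_def ind_def)
    then show ?thesis unfolding eq by simp
  qed
  have ED: "measure_pmf.expectation P (\<lambda>\<omega>. \<bar>TH N k adjH adjG \<omega> - TMo N k adjH adjG p M \<omega>\<bar>) = c * (\<Sum>s\<in>VT. MM s * g s * p^k)"
  proof -
    have "measure_pmf.expectation P (\<lambda>\<omega>. \<bar>TH N k adjH adjG \<omega> - TMo N k adjH adjG p M \<omega>\<bar>) = measure_pmf.expectation P (\<lambda>\<omega>. c * (\<Sum>s\<in>VT. MM s * g s * ind (img s) \<omega>))"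
      by (simp only: Dform)
    also have "\<dots> = c * (\<Sum>s\<in>VT. MM s * g s * measure_pmf.expectation P (ind (img s)))"
      by (simp add: integ integral_sum)
    also have "\<dots> = c * (\<Sum>s\<in>VT. MM s * g s * p^k)"
      by (intro arg_cong[where f="\<lambda>x. c*x"] sum.cong) (auto simp: Eind[OF imgsub] cardimg)
    finally show ?thesis .
  qed
  have gb: "g s \<le> (\<Sum>A\<in>Bad. if A \<subseteq> img s then 1 else 0)" if s: "s \<in> VT" for s
  proof (cases "goodM N k adjH adjG p M s")
    case True
    then show ?thesis by (auto simp: g_def intro!: sum_nonneg)
  next
    case False
    then obtain A where A: "A \<noteq> {}" "A \<subseteq> img s" "CM N k adjH adjG p M A"
      unfolding goodM_def img_def by auto
    have AB: "A \<in> Bad" using A imgsub[OF s] unfolding Bad_def by auto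
    have "(1::real) = (if A \<subseteq> img s then 1 else 0)" using A by simp
    also have "\<dots> \<le> (\<Sum>A\<in>Bad. if A \<subseteq> img s then 1 else 0)"
      by (rule member_le_sum[OF AB]) (auto simp: finBad)
    finally show ?thesis using False by (simp add: g_def)
  qed
  have EDb: "c * (\<Sum>s\<in>VT. MM s * g s * p^k) \<le> p^k * (\<Sum>A\<in>Bad. t A)"
  proof -
    have "c * (\<Sum>s\<in>VT. MM s * g s * p^k) \<le> c * (\<Sum>s\<in>VT. MM s * (\<Sum>A\<in>Bad. if A \<subseteq> img s then 1 else 0) * p^k)"
      using cnn MMnn gb p01 by (intro mult_left_mono sum_mono mult_right_mono) auto
    also have "\<dots> = p^k * (\<Sum>A\<in>Bad. c * (\<Sum>s\<in>VT. if A \<subseteq> img s then MM s else 0))"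
      by (simp add: sum_distrib_left sum_distrib_right sum.swap[of _ Bad] mult_ac if_distrib cong: if_cong)
    also have "\<dots> = p^k * (\<Sum>A\<in>Bad. t A)" by (simp add: t_eq)
    finally show ?thesis .
  qed
  have MVpos: "0 < sqrt (M * V)" using M Vpos by simp
  have perA: "p^k * t A \<le> (t A)^2 * p^(2*k - card A) / sqrt (M * V)" if "A \<in> Bad" for A
  proof -
    define a where "a = card A"
    have ak: "a \<le> k" and bi: "M * V * p^a < (t A)^2 * p^(2*k - a)" using bad[OF that] a_def by auto
    define x where "x = t A * p^(k-a)"
    have x0: "0 \<le> x" unfolding x_def using tnn p01 by simp
    have ee: "2*k - a = (k-a)+(k-a)+a" using ak by simp
    have e1: "p^(2*k - a) = p^(k-a) * p^(k-a) * p^a" unfolding ee by (simp only: power_add)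
    have e2: "p^k = p^(k-a) * p^a" using ak by (simp flip: power_add)
    have pa: "0 < p^a" using p by simp
    have "(t A)^2 * p^(2*k - a) = x^2 * p^a" unfolding x_def e1 by (simp add: power2_eq_square mult_ac)
    with bi have "M * V * p^a < x^2 * p^a" by simp
    then have "M * V < x^2" using pa by simp
    then have sx: "sqrt (M * V) < x" using x0 real_sqrt_less_mono[of "M*V" "x^2"] by simp
    have "p^k * t A * sqrt (M * V) = x * p^a * sqrt (M * V)" unfolding x_def e2 by (simp add: mult_ac)
    also have "\<dots> \<le> x * p^a * x" using sx x0 pa by (intro mult_left_mono) auto
    also have "\<dots> = (t A)^2 * p^(2*k - a)" unfolding x_def e1 by (simp add: power2_eq_square mult_ac)
    finally have "p^k * t A * sqrt (M * V) \<le> (t A)^2 * p^(2*k - a)" .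
    then show ?thesis using MVpos a_def by (simp add: pos_le_divide_eq)
  qed
  have partB: "(1 / sqrt V) * measure_pmf.expectation P (\<lambda>\<omega>. \<bar>TH N k adjH adjG \<omega> - TMo N k adjH adjG p M \<omega>\<bar>) \<le> (2^k-1)/(sqrt M * (1-p))"
  proof -
    have "measure_pmf.expectation P (\<lambda>\<omega>. \<bar>TH N k adjH adjG \<omega> - TMo N k adjH adjG p M \<omega>\<bar>) \<le> p^k * (\<Sum>A\<in>Bad. t A)"
      using ED EDb by simp
    also have "\<dots> = (\<Sum>A\<in>Bad. p^k * t A)" by (simp add: sum_distrib_left)
    also have "\<dots> \<le> (\<Sum>A\<in>Bad. (t A)^2 * p^(2*k - card A) / sqrt (M * V))"
      using perA by (rule sum_mono)
    also have "\<dots> \<le> (\<Sum>A\<in>Pow {1..N} - {{}}. (t A)^2 * p^(2*k - card A) / sqrt (M * V))"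
      using Bad_sub MVpos p01 by (intro sum_mono2) auto
    also have "\<dots> = Q / sqrt (M * V)" unfolding Q_def by (simp add: sum_divide_distrib)
    also have "\<dots> \<le> (2^k-1) * V / (1-p) / sqrt (M * V)"
      using Qb MVpos by (intro divide_right_mono) auto
    finally have E: "measure_pmf.expectation P (\<lambda>\<omega>. \<bar>TH N k adjH adjG \<omega> - TMo N k adjH adjG p M \<omega>\<bar>) \<le> (2^k-1) * V / (1-p) / sqrt (M * V)" .
    have sV: "0 < sqrt V" using Vpos by simp
    have "(1 / sqrt V) * measure_pmf.expectation P (\<lambda>\<omega>. \<bar>TH N k adjH adjG \<omega> - TMo N k adjH adjG p M \<omega>\<bar>) \<le> (1 / sqrt V) * ((2^k-1) * V / (1-p) / sqrt (M * V))"
      using E sV by (intro mult_left_mono) auto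
    also have "\<dots> = (2^k-1)/(sqrt M * (1-p))"
    proof -
      have "sqrt V * sqrt V = V" using Vpos by simp
      then show ?thesis using sV M p by (simp add: real_sqrt_mult field_simps)
    qed
    finally show ?thesis .
  qed
  show ?thesis using partA partB unfolding P_def V_def by simp
qed
end
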